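(* For any $\mathbf A\in\mathbb R^{m\times n}$ and any $\alpha>0$, if $S\sim\mathrm{DPP}(\frac1\alpha\mathbf A^\top\mathbf A)$, then \[ \mathbb E[\mathrm{Er}_{\mathbf A}(S)]=\mathrm{tr}\big(\mathbf A\mathbf A^\top(\mathbf I+\tfrac1\alpha\mathbf A\mathbf A^\top)^{-1}\big)=\mathbb E[|S|]\cdot\alpha. \]
   Context: For $\mathbf A\in\mathbb R^{m\times n}$ with columns $\mathbf a_1,\dots,\mathbf a_n$ and $S\subseteq\{1,\dots,n\}$, $\mathbf P_S$ is the orthogonal projection onto $\mathrm{span}\{\mathbf a_i:i\in S\}$ and $\mathrm{Er}_{\mathbf A}(S)=\|\mathbf A-\mathbf P_S\mathbf A\|_F^2$. For a p.s.d. $n\times n$ matrix $\mathbf K$, $S\sim\mathrm{DPP}(\mathbf K)$ is the distribution over all subsets $S\subseteq\{1,\dots,n\}$ with $\Pr(S)=\det(\mathbf K_{S,S})/\det(\mathbf I+\mathbf K)$, $\mathbf K_{S,S}$ the principal submatrix indexed by $S$ (empty determinant $=1$). *)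

theory Defs
  imports "HOL-Analysis.Analysis"
begin

definition orth_proj :: "(real^'m) set \<Rightarrow> real^'m \<Rightarrow> real^'m" where
  "orth_proj V x = (THE y. y \<in> span V \<and> (\<forall>v\<in>span V. (x - y) \<bullet> v = 0))"

definition proj_cols :: "real^'n^'m \<Rightarrow> 'n set \<Rightarrow> real^'m^'m" where
  "proj_cols A S = matrix (orth_proj ((\<lambda>i. column i A) ` S))"

definition frob_sq :: "real^'n^'m \<Rightarrow> real" where
  "frob_sq M = (\<Sum>i\<in>UNIV. \<Sum>j\<in>UNIV. (M$i$j)^2)"

definition Er :: "real^'n^'m \<Rightarrow> 'n set \<Rightarrow> real" where
  "Er A S = frob_sq (A - proj_cols A S ** A)"

text \<open>Principal minor det(K_{S,S}) (Leibniz formula over S; empty minor = 1).\<close>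
definition principal_minor :: "real^'n^'n \<Rightarrow> 'n set \<Rightarrow> real" where
  "principal_minor K S = (\<Sum>p\<in>{p. p permutes S}. of_int (sign p) * (\<Prod>i\<in>S. K$i$(p i)))"

definition dpp_prob :: "real^'n^'n \<Rightarrow> 'n set \<Rightarrow> real" where
  "dpp_prob K S = principal_minor K S / det (mat 1 + K)"

definition dpp_expect :: "real^'n^'n \<Rightarrow> ('n set \<Rightarrow> real) \<Rightarrow> real" where
  "dpp_expect K f = (\<Sum>S\<in>Pow (UNIV::'n set). dpp_prob K S * f S)"

end

theory Submission imports Defs begin

definition emb :: "real^'n^'n \<Rightarrow> 'n set \<Rightarrow> real^'n^'n" where
  "emb K S = (\<chi> i j. if i \<in> S \<and> j \<in> S then K$i$j else if i = j then 1 else 0)"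

lemma permutes_UNIV_fix:
  assumes "p permutes (UNIV::'n set)" "\<forall>i. i \<notin> S \<longrightarrow> p i = i"
  shows "p permutes S"
  using assms unfolding permutes_def by blast

lemma pm_emb: "principal_minor K S = det (emb K (S::'n::finite set))"
proof -
  have eq: "(\<Prod>i\<in>UNIV. emb K S $ i $ p i) = (if p permutes S then (\<Prod>i\<in>S. K$i$(p i)) else 0)"
    if p: "p permutes UNIV" for p
  proof (cases "p permutes S")
    case True
    have "(\<Prod>i\<in>UNIV. emb K S $ i $ p i) = (\<Prod>i\<in>S. emb K S $ i $ p i)"
      by (rule prod.mono_neutral_right) (auto simp: emb_def permutes_not_in[OF True])
    also have "\<dots> = (\<Prod>i\<in>S. K$i$(p i))"
      by (rule prod.cong) (auto simp: emb_def permutes_in_image[OF True])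
    finally show ?thesis using True by simp
  next
    case False
    then obtain i where i: "i \<notin> S" "p i \<noteq> i" using permutes_UNIV_fix[OF p] by blast
    have "emb K S $ i $ p i = 0" using i by (auto simp: emb_def)
    then have "(\<Prod>i\<in>UNIV. emb K S $ i $ p i) = 0" by (meson UNIV_I finite prod_zero)
    then show ?thesis using False by simp
  qed
  have "det (emb K S) = (\<Sum>p\<in>{p. p permutes UNIV}. of_int (sign p) * (if p permutes S then (\<Prod>i\<in>S. K$i$(p i)) else 0))"
    unfolding det_def by (rule sum.cong) (auto simp: eq)
  also have "\<dots> = (\<Sum>p\<in>{p. p permutes S}. of_int (sign p) * (\<Prod>i\<in>S. K$i$(p i)))"
    by (rule sum.mono_neutral_cong_right) (auto intro: permutes_subset finite_permutations)
  finally show ?thesis unfolding principal_minor_def by simp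
qed

lemma det_I_plus: "det (mat 1 + K) = (\<Sum>T\<in>Pow (UNIV::'n::finite set). principal_minor K T)"
proof -
  have eq: "(\<Prod>i\<in>UNIV. (mat 1 + K) $ i $ p i) = (\<Sum>T\<in>Pow UNIV. if p permutes T then (\<Prod>i\<in>T. K$i$(p i)) else 0)"
    if p: "p permutes UNIV" for p
  proof -
    have "(\<Prod>i\<in>UNIV. (mat 1 + K) $ i $ p i) = (\<Prod>i\<in>UNIV. K$i$(p i) + (if i = p i then 1 else 0))"
      by (rule prod.cong) (auto simp: mat_def)
    also have "\<dots> = (\<Sum>T\<in>Pow UNIV. (\<Prod>i\<in>T. K$i$(p i)) * (\<Prod>i\<in>UNIV - T. if i = p i then 1 else 0))"
      by (rule prod_add) simp
    also have "\<dots> = (\<Sum>T\<in>Pow UNIV. if p permutes T then (\<Prod>i\<in>T. K$i$(p i)) else 0)"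
    proof (rule sum.cong)
      fix T assume "T \<in> Pow (UNIV::'n set)"
      show "(\<Prod>i\<in>T. K$i$(p i)) * (\<Prod>i\<in>UNIV - T. if i = p i then 1 else (0::real)) = (if p permutes T then (\<Prod>i\<in>T. K$i$(p i)) else 0)"
      proof (cases "p permutes T")
        case True
        then show ?thesis by (auto simp: permutes_not_in intro!: prod.neutral)
      next
        case False
        then obtain i where i: "i \<notin> T" "p i \<noteq> i" using permutes_UNIV_fix[OF p] by blast
        then have "(\<Prod>i\<in>UNIV - T. if i = p i then 1 else (0::real)) = 0"
          by (intro prod_zero) (auto intro!: bexI[of _ i])
        then show ?thesis using False by simp
      qed
    qed simp
    finally show ?thesis .
  qed
  have "det (mat 1 + K) = (\<Sum>p\<in>{p. p permutes UNIV}. \<Sum>T\<in>Pow UNIV. of_int (sign p) * (if p permutes T then (\<Prod>i\<in>T. K$i$(p i)) else 0))"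
    unfolding det_def by (rule sum.cong[OF refl], subst eq, simp, simp only: sum_distrib_left)
  also have "\<dots> = (\<Sum>T\<in>Pow UNIV. \<Sum>p\<in>{p. p permutes UNIV}. of_int (sign p) * (if p permutes T then (\<Prod>i\<in>T. K$i$(p i)) else 0))"
    by (rule sum.swap)
  also have "\<dots> = (\<Sum>T\<in>Pow UNIV. principal_minor K T)"
    unfolding principal_minor_def
    by (rule sum.cong[OF refl], rule sum.mono_neutral_cong_right) (auto intro: permutes_subset finite_permutations)
  finally show ?thesis .
qed

lemma pm_zero_col:
  "principal_minor (\<chi> r c. if c = j then 0 else K$r$c) T = (if j \<in> T then 0 else principal_minor K (T::'n::finite set))"
proof (cases "j \<in> T")
  case True
  have "(\<Prod>i\<in>T. if p i = j then 0 else K$i$(p i)) = 0" if p: "p permutes T" for p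
  proof -
    have "inv p j \<in> T" "p (inv p j) = j"
      using True p permutes_in_image permutes_inv permutes_inverses(1) by fastforce+
    then show ?thesis by (intro prod_zero) (auto intro!: bexI[of _ "inv p j"])
  qed
  then show ?thesis using True unfolding principal_minor_def by (simp add: sum.neutral)
next
  case False
  have "(\<Prod>i\<in>T. if p i = j then 0 else K$i$(p i)) = (\<Prod>i\<in>T. K$i$(p i))" if p: "p permutes T" for p
    using False permutes_in_image[OF p] by (intro prod.cong) auto
  then show ?thesis using False unfolding principal_minor_def by (auto intro: sum.cong)
qed

lemma det_axis_row:
  fixes M M' :: "'a::comm_ring_1^'n^'n"
  assumes "\<And>l. M$i$l = (if l = i then 1 else 0)" "\<And>l. M'$i$l = (if l = i then 1 else 0)"
    "\<And>k l. l \<noteq> i \<Longrightarrow> M$k$l = M'$k$l"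
  shows "det M = det M'"
  unfolding det_def
proof (rule sum.cong[OF refl])
  fix p assume "p \<in> {p. p permutes (UNIV::'n set)}"
  then have p: "p permutes UNIV" by simp
  show "of_int (sign p) * (\<Prod>k\<in>UNIV. M $ k $ p k) = of_int (sign p) * (\<Prod>k\<in>UNIV. M' $ k $ p k)"
  proof (cases "p i = i")
    case True
    have "p k \<noteq> i" if "k \<noteq> i" for k
      using that True p by (metis permutes_inj injD)
    have "(\<Prod>k\<in>UNIV. M $ k $ p k) = (\<Prod>k\<in>UNIV. M' $ k $ p k)"
    proof (rule prod.cong[OF refl])
      fix k show "M $ k $ p k = M' $ k $ p k"
        using \<open>\<And>k. k \<noteq> i \<Longrightarrow> p k \<noteq> i\<close> by (cases "k = i") (simp_all add: assms True)
    qed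
    then show ?thesis by simp
  next
    case False
    then have "(\<Prod>k\<in>UNIV. M $ k $ p k) = 0" "(\<Prod>k\<in>UNIV. M' $ k $ p k) = 0"
      using assms by (auto intro!: prod_zero bexI[of _ i])
    then show ?thesis by simp
  qed
qed


lemma orth_proj_ex:
  fixes V :: "(real^'m) set"
  shows "\<exists>!y. y \<in> span V \<and> (\<forall>v\<in>span V. (x - y) \<bullet> v = 0)"
proof -
  obtain y z where yz: "y \<in> span V" "\<And>w. w \<in> span V \<Longrightarrow> orthogonal z w" "x = y + z"
    using orthogonal_subspace_decomp_exists by blast
  have ex: "y \<in> span V \<and> (\<forall>v\<in>span V. (x - y) \<bullet> v = 0)"
    using yz by (simp add: orthogonal_def)
  moreover have "y' = y" if "y' \<in> span V \<and> (\<forall>v\<in>span V. (x - y') \<bullet> v = 0)" for y'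
  proof -
    have d: "y - y' \<in> span V" using that yz by (simp add: span_diff)
    have "(x - y') \<bullet> (y - y') = 0" "(x - y) \<bullet> (y - y') = 0" using that ex d by auto
    then have "(y - y') \<bullet> (y - y') = 0" by (simp add: inner_diff_left)
    then show ?thesis by simp
  qed
  ultimately show ?thesis by blast
qed

lemma orth_proj_prop:
  "orth_proj V x \<in> span V" "\<And>v. v \<in> span V \<Longrightarrow> (x - orth_proj V x) \<bullet> v = 0"
  using theI'[OF orth_proj_ex[of V x]] unfolding orth_proj_def by auto

lemma orth_proj_unique:
  assumes "y \<in> span V" "\<And>v. v \<in> span V \<Longrightarrow> (x - y) \<bullet> v = 0"
  shows "orth_proj V x = y"
  unfolding orth_proj_def using assms orth_proj_ex[of V x] by (intro the1_equality) auto

lemma orth_proj_linear: "linear (orth_proj V)"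
proof (rule linearI)
  fix x y
  show "orth_proj V (x + y) = orth_proj V x + orth_proj V y"
  proof (rule orth_proj_unique)
    show "orth_proj V x + orth_proj V y \<in> span V" by (simp add: span_add orth_proj_prop)
    fix v assume v: "v \<in> span V"
    have "(x - orth_proj V x) \<bullet> v = 0" "(y - orth_proj V y) \<bullet> v = 0"
      using v by (auto intro: orth_proj_prop)
    then show "(x + y - (orth_proj V x + orth_proj V y)) \<bullet> v = 0"
      by (simp add: inner_diff_left inner_add_left)
  qed
next
  fix c and x :: "real^'a"
  show "orth_proj V (c *\<^sub>R x) = c *\<^sub>R orth_proj V x"
  proof (rule orth_proj_unique)
    show "c *\<^sub>R orth_proj V x \<in> span V" by (simp add: span_mul orth_proj_prop)
    fix v assume "v \<in> span V"
    then have "(x - orth_proj V x) \<bullet> v = 0" by (rule orth_proj_prop)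
    then show "(c *\<^sub>R x - c *\<^sub>R orth_proj V x) \<bullet> v = 0"
      by (metis inner_scaleR_left mult_zero_right scaleR_right_diff_distrib)
  qed
qed

lemma orth_proj_in: "x \<in> span V \<Longrightarrow> orth_proj V x = x"
  by (rule orth_proj_unique) auto

lemma span_image_repr:
  fixes v :: "'n::finite \<Rightarrow> real^'m"
  assumes "y \<in> span (v ` S)"
  shows "\<exists>u. y = (\<Sum>j\<in>S. u j *\<^sub>R v j)"
  using assms
proof (induction rule: span_induct_alt)
  case base
  then show ?case by (auto intro!: exI[of _ "\<lambda>_. 0"])
next
  case (step c x y)
  then obtain u where u: "y = (\<Sum>j\<in>S. u j *\<^sub>R v j)" by blast
  from step obtain j where j: "j \<in> S" "x = v j" by blast
  have "(\<Sum>k\<in>S. (u k + (if k = j then c else 0)) *\<^sub>R v k)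
      = (\<Sum>k\<in>S. u k *\<^sub>R v k) + (\<Sum>k\<in>S. (if k = j then c else 0) *\<^sub>R v k)"
    by (simp add: scaleR_add_left sum.distrib)
  also have "(\<Sum>k\<in>S. (if k = j then c else 0) *\<^sub>R v k) = (\<Sum>k\<in>S. if k = j then c *\<^sub>R v j else 0)"
    by (rule sum.cong) auto
  also have "\<dots> = c *\<^sub>R v j" using j by (simp add: sum.delta)
  finally have "c *\<^sub>R x + y = (\<Sum>k\<in>S. (u k + (if k = j then c else 0)) *\<^sub>R v k)"
    using j u by simp
  then show ?case by (intro exI[of _ "\<lambda>k. u k + (if k = j then c else 0)"])
qed


lemma gram_step:
  fixes v :: "'n::finite \<Rightarrow> real^'m" and K :: "real^'n^'n"
  assumes K: "\<And>j k. K$j$k = c * (v j \<bullet> v k)" and i: "i \<notin> S"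
  shows "det (emb K (insert i S)) = c * ((v i - orth_proj (v`S) (v i)) \<bullet> (v i - orth_proj (v`S) (v i))) * det (emb K S)"
proof -
  define y where "y = orth_proj (v`S) (v i)"
  define r where "r = v i - y"
  define \<rho> where "\<rho> = r \<bullet> r"
  have yspan: "y \<in> span (v`S)" unfolding y_def by (rule orth_proj_prop)
  have rorth: "\<And>w. w \<in> span (v`S) \<Longrightarrow> r \<bullet> w = 0" unfolding r_def y_def by (rule orth_proj_prop)
  obtain u where u: "y = (\<Sum>j\<in>S. u j *\<^sub>R v j)" using span_image_repr[OF yspan] by blast
  have rS: "r \<bullet> v l = 0" if "l \<in> S" for l using that by (intro rorth) (simp add: span_base)
  have ri: "r \<bullet> v i = \<rho>"
  proof -
    have "r \<bullet> v i = r \<bullet> (r + y)" unfolding r_def by simp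
    also have "\<dots> = \<rho> + r \<bullet> y" unfolding \<rho>_def by (simp add: inner_add_right)
    finally show ?thesis using rorth[OF yspan] by simp
  qed
  have yv: "y \<bullet> v l = (\<Sum>j\<in>S. u j * (v j \<bullet> v l))" for l
    unfolding u by (simp add: inner_sum_left)
  define E' where "E' = emb K (insert i S)"
  define x where "x = (\<Sum>j\<in>S. u j *s row j E')"
  define B where "B = (\<chi> k. if k = i then (c*\<rho>) *s axis i (1::real) else row k E')"
  have xl: "x$l = (\<Sum>j\<in>S. u j * E'$j$l)" for l
    unfolding x_def by (simp add: sum_component row_def)
  have rowE: "row i E' = (c*\<rho>) *s axis i 1 + x"
  proof (subst vec_eq_iff, intro allI)
    fix l
    show "row i E' $ l = ((c*\<rho>) *s axis i 1 + x) $ l"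
    proof (cases "l \<in> insert i S")
      case True
      have Ejl: "E'$j$l = K$j$l" if "j \<in> S" for j using that True by (simp add: E'_def emb_def)
      have "row i E' $ l = c * (v i \<bullet> v l)" using True by (simp add: row_def E'_def emb_def K)
      also have "v i \<bullet> v l = r \<bullet> v l + y \<bullet> v l" unfolding r_def by (simp add: inner_diff_left)
      also have "r \<bullet> v l = (if l = i then \<rho> else 0)" using True ri rS by auto
      finally have "row i E' $ l = c * ((if l = i then \<rho> else 0) + (\<Sum>j\<in>S. u j * (v j \<bullet> v l)))"
        by (simp add: yv)
      also have "\<dots> = (c*\<rho>) * (if l = i then 1 else 0) + (\<Sum>j\<in>S. u j * K$j$l)"
        by (simp add: K distrib_left sum_distrib_left mult_ac)
      also have "(\<Sum>j\<in>S. u j * K$j$l) = x$l" unfolding xl by (rule sum.cong) (auto simp: Ejl)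
      finally show ?thesis by (simp add: axis_def)
    next
      case False
      then have "E'$j$l = 0" if "j \<in> insert i S" for j using that by (auto simp: E'_def emb_def)
      then show ?thesis using False by (auto simp: xl row_def axis_def)
    qed
  qed
  have E'eq: "E' = (\<chi> k. if k = i then row i B + x else row k B)"
    using rowE by (auto simp: vec_eq_iff B_def row_def)
  have xspan: "x \<in> vec.span {row j B |j. j \<noteq> i}"
    unfolding x_def
  proof (intro vec.span_sum vec.span_scale vec.span_base)
    fix j assume "j \<in> S"
    then have "j \<noteq> i" using i by auto
    then show "row j E' \<in> {row j B |j. j \<noteq> i}"
      by (auto simp: B_def row_def intro!: exI[of _ j])
  qed
  have "det E' = det B" using det_row_span[OF xspan] E'eq by simp
  also have "det B = (c*\<rho>) * det ((\<chi> k. if k = i then axis i 1 else row k E') :: real^'n^'n)"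
    unfolding B_def using det_row_mul[of i "c*\<rho>" "\<lambda>k. axis i (1::real)" "\<lambda>k. row k E'"] by simp
  also have "det ((\<chi> k. if k = i then axis i 1 else row k E') :: real^'n^'n) = det (emb K S)"
    by (rule det_axis_row[of _ i]) (auto simp: axis_def emb_def E'_def row_def i)
  finally show ?thesis unfolding E'_def \<rho>_def r_def y_def by simp
qed


definition rho :: "real^'n^'m \<Rightarrow> 'n set \<Rightarrow> 'n \<Rightarrow> real" where
  "rho A S j = (column j A - orth_proj ((\<lambda>i. column i A) ` S) (column j A)) \<bullet>
               (column j A - orth_proj ((\<lambda>i. column i A) ` S) (column j A))"

lemma Er_rho: "Er A S = (\<Sum>j\<in>UNIV - S. rho A S j)"
proof -
  let ?\<pi> = "orth_proj ((\<lambda>i. column i A) ` S)"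
  have lin: "Vector_Spaces.linear (*s) (*s) ?\<pi>"
    using orth_proj_linear linear_matrix_vector_mul_eq by blast
  have PA: "(proj_cols A S ** A)$k$j = ?\<pi> (column j A) $ k" for k j
  proof -
    have "(proj_cols A S ** A)$k$j = (proj_cols A S *v column j A) $ k"
      by (simp add: matrix_matrix_mult_def matrix_vector_mult_def column_def)
    also have "proj_cols A S *v column j A = ?\<pi> (column j A)"
      unfolding proj_cols_def by (rule matrix_works[OF lin])
    finally show ?thesis .
  qed
  have "Er A S = (\<Sum>k\<in>UNIV. \<Sum>j\<in>UNIV. (A$k$j - ?\<pi> (column j A) $ k)^2)"
    unfolding Er_def frob_sq_def by (simp add: PA)
  also have "\<dots> = (\<Sum>j\<in>UNIV. \<Sum>k\<in>UNIV. (A$k$j - ?\<pi> (column j A) $ k)^2)"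
    by (rule sum.swap)
  also have "\<dots> = (\<Sum>j\<in>UNIV. rho A S j)"
    unfolding rho_def inner_vec_def by (simp add: power2_eq_square column_def)
  also have "\<dots> = (\<Sum>j\<in>UNIV - S. rho A S j)"
  proof (rule sum.mono_neutral_right)
    show "\<forall>j\<in>UNIV - (UNIV - S). rho A S j = 0"
      by (auto simp: rho_def orth_proj_in span_base)
  qed auto
  finally show ?thesis .
qed

lemma insert_bij:
  "bij_betw (insert j) {S \<in> Pow (UNIV::'n set). j \<notin> S} {T \<in> Pow UNIV. j \<in> T}"
  by (rule bij_betw_byWitness[where f'="\<lambda>T. T - {j}"]) auto

lemma sum_card_split:
  fixes f :: "'n::finite set \<Rightarrow> real"
  shows "(\<Sum>T\<in>Pow UNIV. real (card T) * f T) = (\<Sum>j\<in>UNIV. \<Sum>T\<in>{T \<in> Pow UNIV. j \<in> T}. f T)"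
proof -
  have "(\<Sum>T\<in>Pow UNIV. real (card T) * f T) = (\<Sum>T\<in>Pow UNIV. \<Sum>j\<in>{j\<in>UNIV. j \<in> T}. f T)"
    by (rule sum.cong) auto
  also have "\<dots> = (\<Sum>j\<in>UNIV. \<Sum>T\<in>{T \<in> Pow UNIV. j \<in> T}. f T)"
    by (rule sum.swap_restrict) auto
  finally show ?thesis .
qed

lemma sum_insert_split:
  fixes f :: "'n::finite set \<Rightarrow> real"
  shows "(\<Sum>S\<in>Pow UNIV. \<Sum>j\<in>UNIV - S. f (insert j S)) = (\<Sum>T\<in>Pow UNIV. real (card T) * f T)"
proof -
  have "(\<Sum>S\<in>Pow UNIV. \<Sum>j\<in>UNIV - S. f (insert j S)) = (\<Sum>S\<in>Pow UNIV. \<Sum>j\<in>{j\<in>UNIV. j \<notin> S}. f (insert j S))"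
    by (rule sum.cong) (auto intro: sum.cong)
  also have "\<dots> = (\<Sum>j\<in>UNIV. \<Sum>S\<in>{S \<in> Pow UNIV. j \<notin> S}. f (insert j S))"
    by (rule sum.swap_restrict) auto
  also have "\<dots> = (\<Sum>j\<in>UNIV. \<Sum>T\<in>{T \<in> Pow UNIV. j \<in> T}. f T)"
    by (rule sum.cong[OF refl], rule sum.reindex_bij_betw[OF insert_bij])
  also have "\<dots> = (\<Sum>T\<in>Pow UNIV. real (card T) * f T)"
    by (rule sum_card_split[symmetric])
  finally show ?thesis .
qed


lemma mm_add_rdistrib: "((B::real^'a^'b) + C) ** (D::real^'c^'a) = B ** D + C ** D"
  by (simp add: vec_eq_iff matrix_matrix_mult_def sum.distrib distrib_right)

lemma mm_diff_ldistrib: "(D::real^'a^'b) ** ((B::real^'c^'a) - C) = D ** B - D ** C"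
  by (simp add: vec_eq_iff matrix_matrix_mult_def sum_subtractf right_diff_distrib)

lemma mm_scaleR_right: "(D::real^'a^'b) ** (c *\<^sub>R (B::real^'c^'a)) = c *\<^sub>R (D ** B)"
  by (simp add: vec_eq_iff matrix_matrix_mult_def sum_distrib_left mult_ac)

lemma trace_scaleR: "trace (c *\<^sub>R (X::real^'n^'n)) = c * trace X"
  by (simp add: trace_def sum_distrib_left)

lemma inv_props:
  assumes "invertible (X::real^'n^'n)"
  shows "X ** matrix_inv X = mat 1" "matrix_inv X ** X = mat 1"
proof -
  have "\<exists>X'. X ** X' = mat 1 \<and> X' ** X = mat 1" using assms unfolding invertible_def by blast
  from someI_ex[OF this] show "X ** matrix_inv X = mat 1" "matrix_inv X ** X = mat 1"
    unfolding matrix_inv_def by auto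
qed

lemma gram_invertible:
  fixes B :: "real^'a^'b" and c :: real
  assumes c: "c \<ge> 0"
  shows "invertible (mat 1 + c *\<^sub>R (transpose B ** B))"
proof -
  let ?Q = "mat 1 + c *\<^sub>R (transpose B ** B)"
  have "x = 0" if x: "?Q *v x = 0" for x
  proof -
    have key: "x \<bullet> ((transpose B ** B) *v x) = (B *v x) \<bullet> (B *v x)"
    proof -
      have "x \<bullet> ((transpose B ** B) *v x) = x \<bullet> (transpose B *v (B *v x))"
        by (simp add: matrix_vector_mul_assoc)
      also have "\<dots> = (B *v x) \<bullet> (B *v x)"
        by (metis transpose_matrix_vector inner_commute dot_lmul_matrix)
      finally show ?thesis .
    qed
    have "?Q *v x = x + c *\<^sub>R ((transpose B ** B) *v x)"
      by (simp add: matrix_vector_mult_add_rdistrib scaleR_matrix_vector_assoc)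
    then have "0 = x \<bullet> (x + c *\<^sub>R ((transpose B ** B) *v x))" using x by simp
    also have "\<dots> = x \<bullet> x + c * ((B *v x) \<bullet> (B *v x))"
      by (simp add: inner_add_right key)
    finally have "x \<bullet> x + c * ((B *v x) \<bullet> (B *v x)) = 0" by simp
    moreover have "c * ((B *v x) \<bullet> (B *v x)) \<ge> 0" using c by simp
    moreover have "x \<bullet> x \<ge> 0" by simp
    ultimately have "x \<bullet> x = 0" by linarith
    then show ?thesis by simp
  qed
  then show ?thesis
    unfolding invertible_left_inverse matrix_left_invertible_ker by blast
qed


theorem lemma6:
  fixes A :: "real^'n^'m" and \<alpha> :: real
  assumes "\<alpha> > 0"
  shows "dpp_expect ((1/\<alpha>) *\<^sub>R (transpose A ** A)) (Er A)
           = trace (A ** transpose A ** matrix_inv (mat 1 + (1/\<alpha>) *\<^sub>R (A ** transpose A)))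
       \<and> trace (A ** transpose A ** matrix_inv (mat 1 + (1/\<alpha>) *\<^sub>R (A ** transpose A)))
           = dpp_expect ((1/\<alpha>) *\<^sub>R (transpose A ** A)) (\<lambda>S. real (card S)) * \<alpha>"
proof -
  define L where "L = (1/\<alpha>) *\<^sub>R (transpose A ** A)"
  define N where "N = mat 1 + L"
  define M where "M = mat 1 + (1/\<alpha>) *\<^sub>R (A ** transpose A)"
  define Ni where "Ni = matrix_inv N"
  define Mi where "Mi = matrix_inv M"
  define Z where "Z = (\<Sum>T\<in>Pow (UNIV::'n set). real (card T) * principal_minor L T)"
  have a0: "\<alpha> \<noteq> 0" using assms by simp
  have Lent: "L$j$k = (1/\<alpha>) * (column j A \<bullet> column k A)" for j k
    unfolding L_def by (simp add: matrix_matrix_mult_def transpose_def column_def inner_vec_def)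
  have invN: "invertible N" unfolding N_def L_def using gram_invertible[of "1/\<alpha>" A] assms by simp
  have invM: "invertible M" unfolding M_def
    using gram_invertible[of "1/\<alpha>" "transpose A"] assms by simp
  have detN: "det N \<noteq> 0" using invN invertible_det_nz by blast
  have NNi: "N ** Ni = mat 1" "Ni ** N = mat 1" using inv_props[OF invN] unfolding Ni_def by auto
  have MMi: "M ** Mi = mat 1" "Mi ** M = mat 1" using inv_props[OF invM] unfolding Mi_def by auto
  have F2: "principal_minor L S * rho A S j = \<alpha> * principal_minor L (insert j S)" if "j \<notin> S" for S j
  proof -
    have "principal_minor L (insert j S) = (1/\<alpha>) * rho A S j * principal_minor L S"
      unfolding pm_emb rho_def by (rule gram_step[OF Lent that])
    then show ?thesis using a0 by simp
  qed
  have F3: "(\<Sum>S\<in>Pow UNIV. principal_minor L S * Er A S) = \<alpha> * Z"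
  proof -
    have "(\<Sum>S\<in>Pow UNIV. principal_minor L S * Er A S)
        = (\<Sum>S\<in>Pow UNIV. \<Sum>j\<in>UNIV - S. \<alpha> * principal_minor L (insert j S))"
      unfolding Er_rho sum_distrib_left by (intro sum.cong refl) (simp add: F2)
    also have "\<dots> = \<alpha> * Z"
      unfolding Z_def sum_insert_split[of "\<lambda>T. \<alpha> * principal_minor L T"]
      by (simp add: sum_distrib_left mult_ac)
    finally show ?thesis .
  qed
  have cram: "det (mat 1 + (\<chi> r c. if c = j then 0 else L$r$c)) = Ni$j$j * det N" for j
  proof -
    define x where "x = Ni *v axis j 1"
    have Nx: "N *v x = axis j 1" unfolding x_def by (simp add: matrix_vector_mul_assoc NNi)
    have "det ((\<chi> i k. if k = j then (N *v x)$i else N$i$k) :: real^'n^'n) = x$j * det N"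
      by (rule cramer_lemma)
    moreover have "((\<chi> i k. if k = j then (N *v x)$i else N$i$k) :: real^'n^'n)
        = mat 1 + (\<chi> r c. if c = j then 0 else L$r$c)"
      unfolding Nx by (simp add: vec_eq_iff N_def mat_def axis_def)
    moreover have "x$j = Ni$j$j"
      unfolding x_def by (simp add: matrix_vector_mult_def axis_def if_distrib cong: if_cong)
    ultimately show ?thesis by simp
  qed
  have inner: "(\<Sum>T\<in>{T \<in> Pow UNIV. j \<in> T}. principal_minor L T) = det N - Ni$j$j * det N" for j
  proof -
    have "det N = (\<Sum>T\<in>Pow UNIV. principal_minor L T)" unfolding N_def by (rule det_I_plus)
    also have "\<dots> = (\<Sum>T\<in>Pow UNIV. if j \<in> T then principal_minor L T else 0)
                  + (\<Sum>T\<in>Pow UNIV. if j \<in> T then 0 else principal_minor L T)"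
      by (simp add: sum.distrib[symmetric] if_distrib cong: if_cong)
    also have "(\<Sum>T\<in>Pow UNIV. if j \<in> T then 0 else principal_minor L T)
        = det (mat 1 + (\<chi> r c. if c = j then 0 else L$r$c))"
      by (simp add: det_I_plus pm_zero_col)
    also have "(\<Sum>T\<in>Pow UNIV. if j \<in> T then principal_minor L T else 0)
        = (\<Sum>T\<in>{T \<in> Pow UNIV. j \<in> T}. principal_minor L T)"
      by (rule sum.inter_filter[symmetric]) simp
    finally show ?thesis using cram[of j] by linarith
  qed
  have F5: "Z = det N * (real CARD('n) - trace Ni)"
  proof -
    have "Z = (\<Sum>j\<in>UNIV. det N - Ni$j$j * det N)"
      unfolding Z_def sum_card_split inner ..
    also have "\<dots> = det N * (real CARD('n) - trace Ni)"
      unfolding sum_subtractf trace_def right_diff_distrib sum_distrib_left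
      by (simp add: mult.commute)
    finally show ?thesis .
  qed
  have push: "transpose A ** M = N ** transpose A"
    unfolding M_def N_def L_def
    by (simp add: matrix_add_ldistrib mm_add_rdistrib matrix_scalar_ac scalar_matrix_assoc[symmetric] matrix_mul_assoc)
  have push2: "Ni ** transpose A = transpose A ** Mi"
  proof -
    have "Ni ** transpose A = Ni ** transpose A ** (M ** Mi)" by (simp add: MMi)
    also have "\<dots> = Ni ** (transpose A ** M) ** Mi" by (simp add: matrix_mul_assoc)
    also have "\<dots> = transpose A ** Mi" unfolding push by (simp add: matrix_mul_assoc NNi)
    finally show ?thesis .
  qed
  have AtA: "transpose A ** A = \<alpha> *\<^sub>R (N - mat 1)"
    unfolding N_def L_def using a0 by simp
  have F6: "trace (A ** transpose A ** Mi) = \<alpha> * (real CARD('n) - trace Ni)"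
  proof -
    have "trace (A ** transpose A ** Mi) = trace (A ** (Ni ** transpose A))"
      by (simp add: matrix_mul_assoc push2)
    also have "\<dots> = trace (Ni ** (transpose A ** A))"
      by (subst trace_mul_sym) (simp add: matrix_mul_assoc)
    also have "\<dots> = \<alpha> * (trace (Ni ** N) - trace Ni)"
      unfolding AtA mm_scaleR_right trace_scaleR mm_diff_ldistrib trace_sub by simp
    finally show ?thesis by (simp add: NNi trace_I)
  qed
  have E1: "dpp_expect L (Er A) = \<alpha> * Z / det N"
    unfolding dpp_expect_def dpp_prob_def N_def[symmetric]
    by (simp add: F3[symmetric] sum_divide_distrib)
  have E2: "dpp_expect L (\<lambda>S. real (card S)) = Z / det N"
    unfolding dpp_expect_def dpp_prob_def N_def[symmetric] Z_def
    by (simp add: sum_divide_distrib mult_ac)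
  show ?thesis
    unfolding L_def[symmetric] M_def[symmetric] Mi_def[symmetric] E1 E2 F6 F5
    using detN by simp
qed

end
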